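(* Let $p,q,r$ be positive integers with $\frac1p+\frac1q+\frac1r\le1$, $M=\max\{p,q,r\}$, and $f(x,y,z)=x^p+y^q+z^r+axyz$ on $\mathbb C^3$, where $a$ is a positive real number. For $\varepsilon>0$ and $t\in\mathbb C$ let $V_a(\varepsilon,t)=f^{-1}(t)\cap D^6_\varepsilon$, where $D^6_\varepsilon$ is the closed ball of radius $\varepsilon$ centered at the origin. If $a>12M$ and $0<|t|<1$, then $V_a(1,t)$ is a Milnor fiber of $f$.
   Context: The Milnor radius $\varepsilon_f$ of $f$ is the supremum of $\varepsilon$ such that every sphere $S^5_\rho$ ($0<\rho\le\varepsilon$) centered at the origin is transverse to $f^{-1}(0)$. A Milnor fiber of $f$ is a set $f^{-1}(\delta e^{i\theta})\cap D^6_\varepsilon$ where $\varepsilon<\varepsilon_f$ and $\delta>0$ is such that $f^{-1}(s)$ meets $S^5_\varepsilon$ transversally for all $0\le|s|\le\delta$. *)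

theory Defs
  imports "HOL-Analysis.Analysis"
begin

text \<open>We identify \<open>\<complex>\<^sup>3\<close> with \<open>complex ^ 3\<close>, which as a real inner product space is
  Euclidean \<open>\<real>\<^sup>6\<close>.  \<open>D\<^sup>6_\<epsilon>\<close> is \<open>cball 0 \<epsilon>\<close> and \<open>S\<^sup>5_\<rho>\<close> is \<open>sphere 0 \<rho>\<close>.\<close>

text \<open>The level set \<open>f\<^sup>-\<^sup>1(s)\<close> meets the sphere \<open>S_\<rho>\<close> (= level set of \<open>|x|\<^sup>2\<close>) transversally
  at \<open>x\<close>: \<open>f\<close> is (real) differentiable at \<open>x\<close> and the combined real derivative
  \<open>v \<mapsto> (f' v, x \<bullet> v)\<close> of \<open>(f, |.|\<^sup>2/2)\<close> is surjective onto \<open>\<complex> \<times> \<real>\<close>.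
  (In particular a singular point of \<open>f\<close> is never transverse.)\<close>
definition transversal_at :: "(complex^3 \<Rightarrow> complex) \<Rightarrow> complex^3 \<Rightarrow> bool" where
  "transversal_at f x \<longleftrightarrow>
     (\<exists>f'. (f has_derivative f') (at x) \<and> (\<forall>w c. \<exists>v. f' v = w \<and> inner x v = c))"

definition sphere_transverse :: "(complex^3 \<Rightarrow> complex) \<Rightarrow> complex \<Rightarrow> real \<Rightarrow> bool" where
  "sphere_transverse f s \<rho> \<longleftrightarrow> (\<forall>x \<in> f -` {s} \<inter> sphere 0 \<rho>. transversal_at f x)"

definition milnor_radius :: "(complex^3 \<Rightarrow> complex) \<Rightarrow> ereal" where
  "milnor_radius f = (SUP \<epsilon> \<in> {\<epsilon>. \<epsilon> > 0 \<and> (\<forall>\<rho>. 0 < \<rho> \<and> \<rho> \<le> \<epsilon> \<longrightarrow> sphere_transverse f 0 \<rho>)}. ereal \<epsilon>)"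

definition is_milnor_fiber :: "(complex^3 \<Rightarrow> complex) \<Rightarrow> (complex^3) set \<Rightarrow> bool" where
  "is_milnor_fiber f F \<longleftrightarrow>
     (\<exists>\<epsilon> \<delta> \<theta>. 0 < \<epsilon> \<and> ereal \<epsilon> < milnor_radius f \<and> 0 < \<delta> \<and>
        (\<forall>s. cmod s \<le> \<delta> \<longrightarrow> sphere_transverse f s \<epsilon>) \<and>
        F = f -` {complex_of_real \<delta> * cis \<theta>} \<inter> cball 0 \<epsilon>)"

end

theory Submission
  imports Defs
begin

lemma nth_deriv: "((\<lambda>x::complex^3. x$i) has_derivative (\<lambda>v. v$i)) F"
  by (rule bounded_linear.has_derivative[OF bounded_linear_vec_nth]) (rule has_derivative_ident)

lemma f_deriv:
  fixes p q r :: nat and a :: real and x :: "complex^3"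
  shows "((\<lambda>x::complex^3. (x$1)^p + (x$2)^q + (x$3)^r + complex_of_real a * (x$1) * (x$2) * (x$3)) has_derivative
    (\<lambda>v. (of_nat p * (x$1)^(p-1) + complex_of_real a * x$2 * x$3) * v$1
        + (of_nat q * (x$2)^(q-1) + complex_of_real a * x$1 * x$3) * v$2
        + (of_nat r * (x$3)^(r-1) + complex_of_real a * x$1 * x$2) * v$3)) (at x)"
  apply (rule derivative_eq_intros nth_deriv refl)+
  apply (simp add: algebra_simps)
  done

lemma norm3: "(norm (x::complex^3))^2 = norm (x$1)^2 + norm (x$2)^2 + norm (x$3)^2"
  by (simp add: norm_vec_def L2_set_def sum_3)

lemma inner3: "inner (x::complex^3) v = Re (cnj (x$1) * v$1 + cnj (x$2) * v$2 + cnj (x$3) * v$3)"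
  by (simp add: inner_vec_def sum_3 inner_complex_def)

lemma mcnj: "z * cnj z = complex_of_real ((cmod z)^2)"
  by (simp only: complex_norm_square)

lemma transv_crit:
  fixes f :: "complex^3 \<Rightarrow> complex" and g1 g2 g3 :: complex
  assumes der: "(f has_derivative (\<lambda>v. g1 * v$1 + g2 * v$2 + g3 * v$3)) (at x)"
    and x0: "x \<noteq> 0"
    and np: "\<not>(\<exists>l. g1 = l * cnj(x$1) \<and> g2 = l*cnj(x$2) \<and> g3 = l*cnj(x$3))"
  shows "transversal_at f x"
  unfolding transversal_at_def
proof (rule exI[where x="\<lambda>v. g1 * v$1 + g2 * v$2 + g3 * v$3"], rule conjI[OF der], intro allI)
  fix w :: complex and c :: real
  define R where "R = (norm x)^2"
  have R0: "R > 0" using x0 by (simp add: R_def)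
  have Rc: "x$1 * cnj (x$1) + x$2 * cnj (x$2) + x$3 * cnj (x$3) = of_real R"
    unfolding R_def norm3 by (simp only: mcnj of_real_add)
  define G where "G = g1 * x$1 + g2 * x$2 + g3 * x$3"
  define l where "l = G / of_real R"
  define h1 where "h1 = g1 - l * cnj (x$1)"
  define h2 where "h2 = g2 - l * cnj (x$2)"
  define h3 where "h3 = g3 - l * cnj (x$3)"
  have hx: "x$1 * h1 + x$2 * h2 + x$3 * h3 = 0"
  proof -
    have "x$1 * h1 + x$2 * h2 + x$3 * h3 = G - l * (x$1 * cnj (x$1) + x$2 * cnj (x$2) + x$3 * cnj (x$3))"
      by (simp add: h1_def h2_def h3_def G_def algebra_simps)
    also have "\<dots> = 0" using R0 by (simp add: Rc l_def)
    finally show ?thesis .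
  qed
  define H where "H = (norm h1)^2 + (norm h2)^2 + (norm h3)^2"
  have H0: "H > 0"
  proof -
    have "h1 \<noteq> 0 \<or> h2 \<noteq> 0 \<or> h3 \<noteq> 0" using np by (auto simp: h1_def h2_def h3_def)
    moreover have "(cmod h1)^2 \<ge> 0" "(cmod h2)^2 \<ge> 0" "(cmod h3)^2 \<ge> 0" by auto
    moreover have "h1 \<noteq> 0 \<Longrightarrow> (cmod h1)^2 > 0" "h2 \<noteq> 0 \<Longrightarrow> (cmod h2)^2 > 0" "h3 \<noteq> 0 \<Longrightarrow> (cmod h3)^2 > 0" by auto
    ultimately show ?thesis unfolding H_def by linarith
  qed
  have Hc: "h1 * cnj h1 + h2 * cnj h2 + h3 * cnj h3 = of_real H"
    unfolding H_def by (simp only: mcnj of_real_add)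
  have gh: "g1 * cnj h1 + g2 * cnj h2 + g3 * cnj h3 = of_real H"
  proof -
    have "g1 * cnj h1 + g2 * cnj h2 + g3 * cnj h3
       = (h1 * cnj h1 + h2 * cnj h2 + h3 * cnj h3) + l * cnj (x$1 * h1 + x$2 * h2 + x$3 * h3)"
      by (simp add: h1_def h2_def h3_def algebra_simps)
    then show ?thesis using hx Hc by simp
  qed
  define \<beta> where "\<beta> = c / R"
  define \<alpha> where "\<alpha> = (w - of_real \<beta> * G) / of_real H"
  define v :: "complex^3" where "v = vector [\<alpha> * cnj h1 + of_real \<beta> * x$1, \<alpha> * cnj h2 + of_real \<beta> * x$2, \<alpha> * cnj h3 + of_real \<beta> * x$3]"
  show "\<exists>v. g1 * v$1 + g2 * v$2 + g3 * v$3 = w \<and> inner x v = c"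
  proof (intro exI conjI)
    have "g1 * v$1 + g2 * v$2 + g3 * v$3 = \<alpha> * (g1 * cnj h1 + g2 * cnj h2 + g3 * cnj h3) + of_real \<beta> * G"
      by (simp add: v_def G_def algebra_simps)
    also have "\<dots> = w" using H0 by (simp add: gh \<alpha>_def)
    finally show "g1 * v$1 + g2 * v$2 + g3 * v$3 = w" .
    have "inner x v = Re (\<alpha> * cnj (x$1 * h1 + x$2 * h2 + x$3 * h3) + of_real \<beta> * (x$1 * cnj (x$1) + x$2 * cnj (x$2) + x$3 * cnj (x$3)))"
      unfolding inner3 by (simp add: v_def algebra_simps)
    also have "\<dots> = c" using R0 by (simp add: hx Rc \<beta>_def)
    finally show "inner x v = c" .
  qed
qed

lemma key_ineq:
  fixes r1 r2 r3 :: real and p1 p2 p3 :: nat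
  assumes pos: "r1 > 0" "r2 > 0" "r3 > 0" and w1: "r1 * r2 * r3 \<le> 1"
    and p: "p1 > 0" "p2 > 0" "p3 > 0"
    and S: "1 / real p1 + 1 / real p2 + 1 / real p3 \<le> 1"
    and h1: "r1 ^ p1 > 12 * (r1 * r2 * r3)"
    and h2: "r2 ^ p2 > 12 * (r1 * r2 * r3)"
    and h3: "r3 ^ p3 > 12 * (r1 * r2 * r3)"
  shows False
proof -
  define w where "w = r1 * r2 * r3"
  have w0: "w > 0" using pos by (simp add: w_def)
  define P where "P = p1 * p2 * p3"
  define N where "N = p2 * p3 + p1 * p3 + p1 * p2"
  have "real N \<le> real P"
  proof -
    have "real P * (1 / real p1 + 1 / real p2 + 1 / real p3) \<le> real P * 1"
      using S by (intro mult_left_mono) auto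
    moreover have "real P * (1 / real p1 + 1 / real p2 + 1 / real p3) = real N"
      using p by (simp add: P_def N_def field_simps)
    ultimately show ?thesis by simp
  qed
  hence NP: "N \<le> P" by simp
  have "N > 0" using p by (simp add: N_def)
  have a1: "r1 ^ P > (12 * w) ^ (p2 * p3)"
  proof -
    have "(12 * w) ^ (p2 * p3) < (r1 ^ p1) ^ (p2 * p3)"
      using h1 w0 p by (intro power_strict_mono) (auto simp: w_def)
    moreover have "r1 ^ P = (r1 ^ p1) ^ (p2 * p3)" unfolding power_mult[symmetric] P_def by (simp add: ac_simps)
    ultimately show ?thesis by simp
  qed
  have a2: "r2 ^ P > (12 * w) ^ (p1 * p3)"
  proof -
    have "(12 * w) ^ (p1 * p3) < (r2 ^ p2) ^ (p1 * p3)"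
      using h2 w0 p by (intro power_strict_mono) (auto simp: w_def)
    moreover have "r2 ^ P = (r2 ^ p2) ^ (p1 * p3)" unfolding power_mult[symmetric] P_def by (simp add: ac_simps)
    ultimately show ?thesis by simp
  qed
  have a3: "r3 ^ P > (12 * w) ^ (p1 * p2)"
  proof -
    have "(12 * w) ^ (p1 * p2) < (r3 ^ p3) ^ (p1 * p2)"
      using h3 w0 p by (intro power_strict_mono) (auto simp: w_def)
    moreover have "r3 ^ P = (r3 ^ p3) ^ (p1 * p2)" unfolding power_mult[symmetric] P_def by (simp add: ac_simps)
    ultimately show ?thesis by simp
  qed
  have "w ^ P = r1 ^ P * r2 ^ P * r3 ^ P" by (simp add: w_def power_mult_distrib)
  also have "\<dots> > (12 * w) ^ (p2 * p3) * (12 * w) ^ (p1 * p3) * (12 * w) ^ (p1 * p2)"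
    using a1 a2 a3 w0 pos by (intro mult_strict_mono) (auto intro: mult_pos_pos)
  also have "(12 * w) ^ (p2 * p3) * (12 * w) ^ (p1 * p3) * (12 * w) ^ (p1 * p2) = (12 * w) ^ N"
    by (simp add: N_def power_add)
  finally have lt: "(12 * w) ^ N < w ^ P" .
  have "w ^ P \<le> w ^ N" using NP w0 w1 by (intro power_decreasing) (auto simp: w_def)
  moreover have "w ^ N \<le> (12 * w) ^ N" using w0 by (intro power_mono) auto
  ultimately show False using lt by linarith
qed

lemma sum_id:
  fixes x1 x2 x3 l u :: complex and p1 p2 p3 :: nat
  assumes p: "p1 > 0" "p2 > 0" "p3 > 0"
    and E1: "of_nat p1 * x1^p1 + u = l * of_real ((cmod x1)^2)"
    and E2: "of_nat p2 * x2^p2 + u = l * of_real ((cmod x2)^2)"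
    and E3: "of_nat p3 * x3^p3 + u = l * of_real ((cmod x3)^2)"
  shows "x1^p1 + x2^p2 + x3^p3 + u = l * of_real ((cmod x1)^2 / p1 + (cmod x2)^2 / p2 + (cmod x3)^2 / p3)
           + u * of_real (1 - (1 / real p1 + 1 / real p2 + 1 / real p3))"
proof -
  have e1: "x1^p1 = (l * of_real ((cmod x1)^2) - u) / of_nat p1"
    using E1 p by (simp add: field_simps)
  have e2: "x2^p2 = (l * of_real ((cmod x2)^2) - u) / of_nat p2"
    using E2 p by (simp add: field_simps)
  have e3: "x3^p3 = (l * of_real ((cmod x3)^2) - u) / of_nat p3"
    using E3 p by (simp add: field_simps)
  show ?thesis unfolding e1 e2 e3 using p
    by (simp add: field_simps)
qed

lemma B_idx:
  fixes z l u :: complex and p :: nat and T S :: real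
  assumes T: "T > 0" and S: "S \<le> 1" and lT: "l * of_real T = - u * of_real (1 - S)"
    and E: "of_nat p * z^p + u = l * of_real ((cmod z)^2)"
  shows "cmod u \<le> p * cmod z ^ p"
proof -
  have E': "of_nat p * z^p = l * of_real ((cmod z)^2) - u"
    using E by (metis add_diff_cancel_right')
  have "of_real T * (of_nat p * z^p) = (l * of_real T) * of_real ((cmod z)^2) - u * of_real T"
    unfolding E' by (simp add: algebra_simps)
  also have "\<dots> = - u * of_real ((1 - S) * (cmod z)^2 + T)"
    unfolding lT by (simp add: algebra_simps)
  finally have "T * (p * cmod z ^ p) = cmod u * ((1 - S) * (cmod z)^2 + T)"
    using T S by (metis (no_types, lifting) abs_of_nonneg add_nonneg_nonneg diff_ge_0_iff_ge
        norm_minus_commute norm_mult norm_of_nat norm_of_real norm_power order_less_imp_le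
        zero_le_power2 mult_minus_left norm_minus_cancel mult_nonneg_nonneg)
  moreover have "cmod u * ((1 - S) * (cmod z)^2 + T) \<ge> cmod u * T"
    using S by (intro mult_left_mono) auto
  ultimately have "T * (p * cmod z ^ p) \<ge> T * cmod u" by (simp add: mult.commute)
  then show ?thesis using T by simp
qed

lemma mainB:
  fixes x1 x2 x3 l u :: complex and p1 p2 p3 :: nat and a M :: real
  assumes p: "p1 > 0" "p2 > 0" "p3 > 0"
    and S: "1 / real p1 + 1 / real p2 + 1 / real p3 \<le> 1"
    and M: "real p1 \<le> M" "real p2 \<le> M" "real p3 \<le> M"
    and a: "a > 12 * M"
    and nz: "x1 \<noteq> 0" "x2 \<noteq> 0" "x3 \<noteq> 0"
    and u: "u = of_real a * x1 * x2 * x3"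
    and E1: "of_nat p1 * x1^p1 + u = l * of_real ((cmod x1)^2)"
    and E2: "of_nat p2 * x2^p2 + u = l * of_real ((cmod x2)^2)"
    and E3: "of_nat p3 * x3^p3 + u = l * of_real ((cmod x3)^2)"
    and f0: "x1^p1 + x2^p2 + x3^p3 + u = 0"
    and sq: "(cmod x1)^2 + (cmod x2)^2 + (cmod x3)^2 \<le> 36/25"
  shows False
proof -
  define T where "T = (cmod x1)^2 / p1 + (cmod x2)^2 / p2 + (cmod x3)^2 / p3"
  define S' where "S' = 1 / real p1 + 1 / real p2 + 1 / real p3"
  have T0: "T > 0" using nz p unfolding T_def
    by (intro add_pos_pos divide_pos_pos) auto
  have "l * of_real T + u * of_real (1 - S') = 0"
    using sum_id[OF p E1 E2 E3] f0 by (simp add: T_def S'_def)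
  hence lT: "l * of_real T = - u * of_real (1 - S')" by (simp add: eq_neg_iff_add_eq_0)
  have S'1: "S' \<le> 1" using S by (simp add: S'_def)
  have b1: "cmod u \<le> p1 * cmod x1 ^ p1" by (rule B_idx[OF T0 S'1 lT E1])
  have b2: "cmod u \<le> p2 * cmod x2 ^ p2" by (rule B_idx[OF T0 S'1 lT E2])
  have b3: "cmod u \<le> p3 * cmod x3 ^ p3" by (rule B_idx[OF T0 S'1 lT E3])
  define w where "w = cmod x1 * cmod x2 * cmod x3"
  have w0: "w > 0" using nz by (simp add: w_def)
  have M0: "M > 0" using M p by linarith
  have a0: "a > 0" using a M0 by linarith
  have cu: "cmod u = a * w" using a0 by (simp add: u w_def norm_mult)
  have gen: "r ^ pp > 12 * w" if "cmod u \<le> pp * r ^ pp" "real pp \<le> M" "pp > 0" "r \<ge> 0" for r :: real and pp :: nat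
  proof -
    have "12 * M * w < a * w" using a w0 by simp
    also have "\<dots> \<le> pp * r ^ pp" using that cu by simp
    also have "\<dots> \<le> M * r ^ pp"
      using that(2,4) by (intro mult_right_mono) auto
    finally have "M * (12 * w) < M * r ^ pp" by (simp add: algebra_simps)
    thus ?thesis using M0 by simp
  qed
  have w1: "w \<le> 1"
  proof -
    have n: "cmod x1 \<ge> 0" "cmod x2 \<ge> 0" "cmod x3 \<ge> 0" by auto
    have "2 * (cmod x1 * cmod x2) \<le> (cmod x1)^2 + (cmod x2)^2"
      using sum_squares_bound[of "cmod x1" "cmod x2"] by (simp add: power2_eq_square)
    moreover have "(cmod x3)^2 \<ge> 0" by simp
    ultimately have h12: "cmod x1 * cmod x2 \<le> 18/25" using sq by linarith
    have "(cmod x3)^2 \<le> (6/5)^2" using sq by (simp add: power2_eq_square) (smt (verit) zero_le_square)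
    hence h3: "cmod x3 \<le> 6/5" by (rule power2_le_imp_le) simp
    have "w \<le> 18/25 * (6/5)" unfolding w_def using h12 h3 n
      by (intro mult_mono) auto
    thus ?thesis by simp
  qed
  show False
    by (rule key_ineq[of "cmod x1" "cmod x2" "cmod x3" p1 p2 p3])
       (use nz w1 p S gen[OF b1 M(1) p(1) norm_ge_zero] gen[OF b2 M(2) p(2) norm_ge_zero]
         gen[OF b3 M(3) p(3) norm_ge_zero] in \<open>simp_all add: w_def\<close>)
qed

lemma D_idx:
  fixes z l u :: complex and p :: nat and M :: real
  assumes p: "p \<ge> 2" "real p \<le> M" and z1: "cmod z \<le> 1"
    and E: "of_nat p * z^p + u = l * of_real ((cmod z)^2)"
  shows "cmod (l * of_real ((cmod z)^2) - u) \<le> M * (cmod z)^2"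
proof -
  have "l * of_real ((cmod z)^2) - u = of_nat p * z^p" using E by (metis add_diff_cancel_right')
  hence "cmod (l * of_real ((cmod z)^2) - u) = p * cmod z ^ p" by (simp add: norm_mult norm_power)
  also have "\<dots> \<le> p * (cmod z)^2"
    using p z1 by (intro mult_left_mono power_decreasing) auto
  also have "\<dots> \<le> M * (cmod z)^2" using p by (intro mult_right_mono) auto
  finally show ?thesis .
qed

lemma diff_idx:
  fixes l u :: complex and s t M :: real
  assumes A: "cmod (l * of_real s - u) \<le> M * s" and B: "cmod (l * of_real t - u) \<le> M * t"
    and s: "s \<ge> 0" and t: "t \<ge> 0"
  shows "cmod u * \<bar>s - t\<bar> \<le> 2 * M * s * t"
proof -
  have "u * of_real (s - t) = (l * of_real s - u) * of_real t - (l * of_real t - u) * of_real s"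
    by (simp add: algebra_simps)
  hence "cmod u * \<bar>s - t\<bar> = cmod ((l * of_real s - u) * of_real t - (l * of_real t - u) * of_real s)"
    by (metis norm_mult norm_of_real)
  also have "\<dots> \<le> cmod (l * of_real s - u) * t + cmod (l * of_real t - u) * s"
    using s t by (metis (no_types, lifting) abs_of_nonneg norm_mult norm_of_real norm_triangle_ineq4)
  also have "\<dots> \<le> M * s * t + M * t * s"
    using A B s t by (intro add_mono mult_right_mono) auto
  finally show ?thesis by (simp add: algebra_simps)
qed

lemma gap_lemma:
  fixes l u :: complex and a M r r3 :: real
  assumes D: "cmod (l * of_real (r^2) - u) \<le> M * r^2" and D3: "cmod (l * of_real (r3^2) - u) \<le> M * r3^2"
    and rr: "r3 \<le> r" "r \<le> 1" and r3p: "r3 > 0"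
    and cur: "cmod u \<ge> a * r * r3 * r3" and a: "a > 12 * M" and M0: "M > 0"
  shows "r^2 - r3^2 < 1/6"
proof -
  have a0: "a > 0" using a M0 by linarith
  have rp: "r > 0" using rr r3p by linarith
  have ge: "r^2 - r3^2 \<ge> 0" using rr r3p by (simp add: power_mono)
  have "cmod u * \<bar>r^2 - r3^2\<bar> \<le> 2 * M * r^2 * r3^2"
    by (rule diff_idx[OF D D3]) auto
  moreover have "a * r * r3 * r3 * (r^2 - r3^2) \<le> cmod u * \<bar>r^2 - r3^2\<bar>"
    using ge cur by (simp add: mult_right_mono)
  ultimately have "a * r * r3 * r3 * (r^2 - r3^2) \<le> 2 * M * r^2 * r3^2" by linarith
  hence "(r * r3 * r3) * (a * (r^2 - r3^2)) \<le> (r * r3 * r3) * (2 * M * r)"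
    by (simp add: power2_eq_square algebra_simps)
  hence "a * (r^2 - r3^2) \<le> 2 * M * r"
    using rp r3p by (simp add: mult_le_cancel_left_pos)
  also have "\<dots> \<le> 2 * M" using rr M0 by simp
  also have "\<dots> < a / 6" using a by simp
  finally have "a * (r^2 - r3^2) < a * (1/6)" by simp
  thus ?thesis using a0 by (simp only: mult_less_cancel_left_pos)
qed

lemma mainA:
  fixes x1 x2 x3 l u :: complex and p1 p2 p3 :: nat and a M :: real
  assumes p: "p1 \<ge> 2" "p2 \<ge> 2" "p3 \<ge> 2"
    and S: "1 / real p1 + 1 / real p2 + 1 / real p3 \<le> 1"
    and M: "real p1 \<le> M" "real p2 \<le> M" "real p3 \<le> M"
    and a: "a > 12 * M"
    and nz: "x1 \<noteq> 0" "x2 \<noteq> 0" "x3 \<noteq> 0"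
    and u: "u = of_real a * x1 * x2 * x3"
    and E1: "of_nat p1 * x1^p1 + u = l * of_real ((cmod x1)^2)"
    and E2: "of_nat p2 * x2^p2 + u = l * of_real ((cmod x2)^2)"
    and E3: "of_nat p3 * x3^p3 + u = l * of_real ((cmod x3)^2)"
    and sq: "(cmod x1)^2 + (cmod x2)^2 + (cmod x3)^2 = 1"
    and o1: "cmod x3 \<le> cmod x1" and o2: "cmod x3 \<le> cmod x2"
  shows "cmod (x1^p1 + x2^p2 + x3^p3 + u) \<ge> 1"
proof -
  define r1 r2 r3 where "r1 = cmod x1" and "r2 = cmod x2" and "r3 = cmod x3"
  have rpos: "r1 > 0" "r2 > 0" "r3 > 0" using nz by (auto simp: r1_def r2_def r3_def)
  have sq': "r1^2 + r2^2 + r3^2 = 1" using sq by (simp add: r1_def r2_def r3_def)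
  have r1le: "r1 \<le> 1"
  proof -
    have "r2^2 \<ge> 0" "r3^2 \<ge> 0" by simp_all
    hence "r1^2 \<le> 1" using sq' by linarith
    hence "r1^2 \<le> 1^2" by simp
    thus ?thesis by (rule power2_le_imp_le) simp
  qed
  have r2le: "r2 \<le> 1"
  proof -
    have "r1^2 \<ge> 0" "r3^2 \<ge> 0" by simp_all
    hence "r2^2 \<le> 1" using sq' by linarith
    hence "r2^2 \<le> 1^2" by simp
    thus ?thesis by (rule power2_le_imp_le) simp
  qed
  have r3le: "r3 \<le> 1" using o1 r1le by (simp add: r1_def r3_def)
  have M0: "M > 0" using M p by linarith
  have a0: "a > 0" using a M0 by linarith
  have cu: "cmod u = a * r1 * r2 * r3" using a0 by (simp add: u r1_def r2_def r3_def norm_mult)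
  have D1: "cmod (l * of_real (r1^2) - u) \<le> M * r1^2"
    unfolding r1_def by (rule D_idx[OF p(1) M(1) _ E1]) (use r1le r1_def in simp)
  have D2: "cmod (l * of_real (r2^2) - u) \<le> M * r2^2"
    unfolding r2_def by (rule D_idx[OF p(2) M(2) _ E2]) (use r2le r2_def in simp)
  have D3: "cmod (l * of_real (r3^2) - u) \<le> M * r3^2"
    unfolding r3_def by (rule D_idx[OF p(3) M(3) _ E3]) (use r3le r3_def in simp)
  have o1': "r3 \<le> r1" and o2': "r3 \<le> r2" using o1 o2 by (simp_all add: r1_def r2_def r3_def)
  have "(a * r1 * r3) * r3 \<le> (a * r1 * r3) * r2"
    using o2' a0 rpos by (intro mult_left_mono) auto
  hence c1: "cmod u \<ge> a * r1 * r3 * r3" using cu by (simp only: ac_simps)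
  have "(a * r2 * r3) * r3 \<le> (a * r2 * r3) * r1"
    using o1' a0 rpos by (intro mult_left_mono) auto
  hence c2: "cmod u \<ge> a * r2 * r3 * r3" using cu by (simp only: ac_simps)
  have g1: "r1^2 - r3^2 < 1/6" by (rule gap_lemma[OF D1 D3 o1' r1le rpos(3) c1 a M0])
  have g2: "r2^2 - r3^2 < 1/6" by (rule gap_lemma[OF D2 D3 o2' r2le rpos(3) c2 a M0])
  have "r3^2 > 2/9" using g1 g2 sq' by linarith
  hence r3b: "r3 > 1/3"
  proof -
    have "(1/3)^2 < r3^2" using \<open>r3^2 > 2/9\<close> by (simp add: power2_eq_square)
    thus ?thesis by (rule power2_less_imp_less) (use rpos in auto)
  qed
  define T where "T = r1^2 / p1 + r2^2 / p2 + r3^2 / p3"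
  define S' where "S' = 1 / real p1 + 1 / real p2 + 1 / real p3"
  have TM: "T \<ge> 1 / M"
  proof -
    have "r1^2 / M \<le> r1^2 / p1" using M p by (intro divide_left_mono) auto
    moreover have "r2^2 / M \<le> r2^2 / p2" using M p by (intro divide_left_mono) auto
    moreover have "r3^2 / M \<le> r3^2 / p3" using M p by (intro divide_left_mono) auto
    moreover have "r1^2 / M + r2^2 / M + r3^2 / M = 1 / M" using sq' by (simp add: add_divide_distrib[symmetric])
    ultimately show ?thesis unfolding T_def by linarith
  qed
  have T0: "T > 0" using TM M0 by (meson divide_pos_pos order_less_le_trans zero_less_one)
  define f where "f = x1^p1 + x2^p2 + x3^p3 + u"
  have fid: "f = l * of_real T + u * of_real (1 - S')"
    using sum_id[OF _ _ _ E1 E2 E3] p by (simp add: f_def T_def S'_def r1_def r2_def r3_def)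
  define A where "A = l * of_real (r3^2) - u"
  have "of_real (r3^2) * f = u * of_real (T + (1 - S') * r3^2) + A * of_real T"
    unfolding fid A_def by (simp add: algebra_simps)
  hence "r3^2 * cmod f = cmod (u * of_real (T + (1 - S') * r3^2) + A * of_real T)"
    by (metis norm_mult norm_of_real abs_of_nonneg zero_le_power2)
  hence "r3^2 * cmod f \<ge> cmod (u * of_real (T + (1 - S') * r3^2)) - cmod (A * of_real T)"
    using norm_diff_ineq[of "u * of_real (T + (1 - S') * r3^2)" "A * of_real T"] by simp
  moreover have "cmod (u * of_real (T + (1 - S') * r3^2)) \<ge> cmod u * T"
  proof -
    have "1 - S' \<ge> 0" using S by (simp add: S'_def)
    hence X: "T + (1 - S') * r3^2 \<ge> T" by simp
    have "cmod (u * of_real (T + (1 - S') * r3^2)) = cmod u * \<bar>T + (1 - S') * r3^2\<bar>"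
      unfolding norm_mult norm_of_real ..
    also have "\<dots> = cmod u * (T + (1 - S') * r3^2)" using X T0 by simp
    finally show ?thesis using X by (simp add: mult_left_mono)
  qed
  moreover have "cmod (A * of_real T) \<le> M * r3^2 * T"
  proof -
    have "cmod (A * of_real T) = cmod A * \<bar>T\<bar>" unfolding norm_mult norm_of_real ..
    also have "\<dots> = cmod A * T" using T0 by simp
    also have "\<dots> \<le> M * r3^2 * T" using D3 T0 unfolding A_def by (simp add: mult_right_mono)
    finally show ?thesis .
  qed
  moreover have "cmod u \<ge> a * r3 * r3^2"
  proof -
    have "r3 * r3 \<le> r1 * r2" using o1 o2 rpos by (intro mult_mono) (auto simp: r1_def r2_def r3_def)
    hence "a * r3 * (r3 * r3) \<le> a * r3 * (r1 * r2)" using a0 rpos by simp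
    thus ?thesis using cu by (simp add: power2_eq_square algebra_simps)
  qed
  ultimately have c1: "r3^2 * cmod f \<ge> cmod u * T - M * r3^2 * T" by linarith
  have "cmod u * T \<ge> a * r3 * r3^2 * T" using \<open>cmod u \<ge> a * r3 * r3^2\<close> T0 by (simp add: mult_right_mono)
  with c1 have "r3^2 * cmod f \<ge> a * r3 * r3^2 * T - M * r3^2 * T" by linarith
  moreover have "a * r3 * r3^2 * T - M * r3^2 * T = r3^2 * (T * (a * r3 - M))" by (simp add: algebra_simps)
  ultimately have "r3^2 * cmod f \<ge> r3^2 * (T * (a * r3 - M))" by linarith
  hence ft: "cmod f \<ge> T * (a * r3 - M)" using rpos by (simp add: mult_le_cancel_left_pos)
  have "a * r3 - M \<ge> 3 * M"
  proof -
    have "a * r3 \<ge> a * (1/3)" using r3b a0 by simp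
    thus ?thesis using a by simp
  qed
  hence "T * (a * r3 - M) \<ge> (1 / M) * (3 * M)" using TM M0 T0 by (intro mult_mono) auto
  hence "cmod f \<ge> 3" using ft M0 by simp
  thus ?thesis unfolding f_def by simp
qed

lemma zc:
  fixes y z :: complex and q r :: nat
  assumes yz: "y * z = 0" and q: "q > 0" and r: "r > 0"
  shows "(cmod y)^2 + (cmod z)^2 = 1 \<Longrightarrow> cmod (y^q + z^r) = 1"
    and "y^q + z^r = 0 \<Longrightarrow> (cmod y)^2 + (cmod z)^2 = 0"
proof -
  have c: "y = 0 \<or> z = 0" using yz by simp
  show "(cmod y)^2 + (cmod z)^2 = 1 \<Longrightarrow> cmod (y^q + z^r) = 1"
  proof -
    assume h: "(cmod y)^2 + (cmod z)^2 = 1"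
    from c show ?thesis
    proof
      assume "y = 0"
      hence "(cmod z)^2 = 1" using h by simp
      hence "cmod z = 1" using norm_ge_zero[of z] by (simp add: power2_eq_1_iff)
      thus ?thesis using \<open>y = 0\<close> q by (simp add: norm_power zero_power)
    next
      assume "z = 0"
      hence "(cmod y)^2 = 1" using h by simp
      hence "cmod y = 1" using norm_ge_zero[of y] by (simp add: power2_eq_1_iff)
      thus ?thesis using \<open>z = 0\<close> r by (simp add: norm_power zero_power)
    qed
  qed
  show "y^q + z^r = 0 \<Longrightarrow> (cmod y)^2 + (cmod z)^2 = 0"
    using c q r by (auto simp: zero_power)
qed

lemma Eq_from_grad:
  fixes x1 l c :: complex and p :: nat
  assumes p: "p > 0" and G: "of_nat p * x1^(p-1) + c = l * cnj x1"
  shows "of_nat p * x1^p + x1 * c = l * of_real ((cmod x1)^2)"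
proof -
  have "x1^p = x1 * x1^(p-1)" using p by (cases p) auto
  hence "of_nat p * x1^p + x1 * c = x1 * (of_nat p * x1^(p-1) + c)" by (simp add: algebra_simps)
  also have "\<dots> = l * (x1 * cnj x1)" unfolding G by (simp add: algebra_simps)
  finally show ?thesis by (simp add: mcnj)
qed

lemma nonpar:
  fixes x1 x2 x3 l :: complex and p q r :: nat and a M :: real
  assumes p: "p \<ge> 2" "q \<ge> 2" "r \<ge> 2"
    and S: "1 / real p + 1 / real q + 1 / real r \<le> 1"
    and M: "real p \<le> M" "real q \<le> M" "real r \<le> M"
    and a: "a > 12 * M"
    and G1: "of_nat p * x1^(p-1) + of_real a * x2 * x3 = l * cnj x1"
    and G2: "of_nat q * x2^(q-1) + of_real a * x1 * x3 = l * cnj x2"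
    and G3: "of_nat r * x3^(r-1) + of_real a * x1 * x2 = l * cnj x3"
    and cond: "((cmod x1)^2 + (cmod x2)^2 + (cmod x3)^2 = 1 \<and> cmod (x1^p + x2^q + x3^r + of_real a * x1 * x2 * x3) < 1)
       \<or> (0 < (cmod x1)^2 + (cmod x2)^2 + (cmod x3)^2 \<and> (cmod x1)^2 + (cmod x2)^2 + (cmod x3)^2 \<le> 36/25
          \<and> x1^p + x2^q + x3^r + of_real a * x1 * x2 * x3 = 0)"
  shows False
proof -
  have M0: "M > 0" using M p by linarith
  have a0: "a \<noteq> 0" using a M0 by linarith
  show False
  proof (cases "x1 = 0 \<or> x2 = 0 \<or> x3 = 0")
    case True
    then show False
    proof (elim disjE)
      assume x: "x1 = 0"
      have "of_real a * x2 * x3 = 0" using G1 x p by (simp add: zero_power)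
      hence yz: "x2 * x3 = 0" using a0 by simp
      show False using cond zc[OF yz, of q r] x p by (auto simp: zero_power)
    next
      assume x: "x2 = 0"
      have "of_real a * x1 * x3 = 0" using G2 x p by (simp add: zero_power)
      hence yz: "x1 * x3 = 0" using a0 by simp
      show False using cond zc[OF yz, of p r] x p by (auto simp: zero_power)
    next
      assume x: "x3 = 0"
      have "of_real a * x1 * x2 = 0" using G3 x p by (simp add: zero_power)
      hence yz: "x1 * x2 = 0" using a0 by simp
      show False using cond zc[OF yz, of p q] x p by (auto simp: zero_power)
    qed
  next
    case False
    hence nz: "x1 \<noteq> 0" "x2 \<noteq> 0" "x3 \<noteq> 0" by auto
    define u where "u = of_real a * x1 * x2 * x3"
    have E1: "of_nat p * x1^p + u = l * of_real ((cmod x1)^2)"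
      using Eq_from_grad[OF _ G1] p by (simp add: u_def ac_simps)
    have E2: "of_nat q * x2^q + u = l * of_real ((cmod x2)^2)"
      using Eq_from_grad[OF _ G2] p by (simp add: u_def ac_simps)
    have E3: "of_nat r * x3^r + u = l * of_real ((cmod x3)^2)"
      using Eq_from_grad[OF _ G3] p by (simp add: u_def ac_simps)
    from cond show False
    proof (elim disjE conjE)
      assume sq: "(cmod x1)^2 + (cmod x2)^2 + (cmod x3)^2 = 1"
        and f1: "cmod (x1^p + x2^q + x3^r + of_real a * x1 * x2 * x3) < 1"
      have f1': "cmod (x1^p + x2^q + x3^r + u) < 1" using f1 by (simp add: u_def)
      consider "cmod x3 \<le> cmod x1 \<and> cmod x3 \<le> cmod x2" | "cmod x1 \<le> cmod x2 \<and> cmod x1 \<le> cmod x3"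
        | "cmod x2 \<le> cmod x1 \<and> cmod x2 \<le> cmod x3" by linarith
      then show False
      proof cases
        case 1
        have "cmod (x1^p + x2^q + x3^r + u) \<ge> 1"
          by (rule mainA[OF p S M a nz u_def E1 E2 E3 sq]) (use 1 in auto)
        thus False using f1' by simp
      next
        case 2
        have "cmod (x2^q + x3^r + x1^p + u) \<ge> 1"
          by (rule mainA[OF p(2) p(3) p(1) _ M(2) M(3) M(1) a nz(2) nz(3) nz(1) _ E2 E3 E1])
             (use 2 S sq in \<open>auto simp: u_def ac_simps\<close>)
        thus False using f1' by (simp add: ac_simps)
      next
        case 3
        have "cmod (x1^p + x3^r + x2^q + u) \<ge> 1"
          by (rule mainA[OF p(1) p(3) p(2) _ M(1) M(3) M(2) a nz(1) nz(3) nz(2) _ E1 E3 E2])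
             (use 3 S sq in \<open>auto simp: u_def ac_simps\<close>)
        thus False using f1' by (simp add: ac_simps)
      qed
    next
      assume sq: "(cmod x1)^2 + (cmod x2)^2 + (cmod x3)^2 \<le> 36/25"
        and f0: "x1^p + x2^q + x3^r + of_real a * x1 * x2 * x3 = 0"
      show False
        by (rule mainB[OF _ _ _ S M a nz u_def E1 E2 E3 _ sq]) (use p f0 in \<open>auto simp: u_def\<close>)
    qed
  qed
qed

lemma transv_point:
  fixes p q r :: nat and a M :: real and x :: "complex^3"
  assumes p: "p \<ge> 2" "q \<ge> 2" "r \<ge> 2"
    and S: "1 / real p + 1 / real q + 1 / real r \<le> 1"
    and M: "real p \<le> M" "real q \<le> M" "real r \<le> M"
    and a: "a > 12 * M"
    and cond: "(norm x = 1 \<and> cmod ((x$1)^p + (x$2)^q + (x$3)^r + complex_of_real a * (x$1) * (x$2) * (x$3)) < 1)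
      \<or> (0 < norm x \<and> norm x \<le> 6/5 \<and> (x$1)^p + (x$2)^q + (x$3)^r + complex_of_real a * (x$1) * (x$2) * (x$3) = 0)"
  shows "transversal_at (\<lambda>x::complex^3. (x$1)^p + (x$2)^q + (x$3)^r + complex_of_real a * (x$1) * (x$2) * (x$3)) x"
proof (rule transv_crit[OF f_deriv])
  show "x \<noteq> 0" using cond by auto
  show "\<not> (\<exists>l. of_nat p * (x$1)^(p-1) + complex_of_real a * x$2 * x$3 = l * cnj (x$1) \<and>
              of_nat q * (x$2)^(q-1) + complex_of_real a * x$1 * x$3 = l * cnj (x$2) \<and>
              of_nat r * (x$3)^(r-1) + complex_of_real a * x$1 * x$2 = l * cnj (x$3))"
  proof
    assume "\<exists>l. of_nat p * (x$1)^(p-1) + complex_of_real a * x$2 * x$3 = l * cnj (x$1) \<and>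
              of_nat q * (x$2)^(q-1) + complex_of_real a * x$1 * x$3 = l * cnj (x$2) \<and>
              of_nat r * (x$3)^(r-1) + complex_of_real a * x$1 * x$2 = l * cnj (x$3)"
    then obtain l where G: "of_nat p * (x$1)^(p-1) + complex_of_real a * x$2 * x$3 = l * cnj (x$1)"
              "of_nat q * (x$2)^(q-1) + complex_of_real a * x$1 * x$3 = l * cnj (x$2)"
              "of_nat r * (x$3)^(r-1) + complex_of_real a * x$1 * x$2 = l * cnj (x$3)" by blast
    have n3: "(cmod (x$1))^2 + (cmod (x$2))^2 + (cmod (x$3))^2 = (norm x)^2" by (simp add: norm3)
    have c2: "((cmod (x$1))^2 + (cmod (x$2))^2 + (cmod (x$3))^2 = 1 \<and> cmod ((x$1)^p + (x$2)^q + (x$3)^r + of_real a * (x$1) * (x$2) * (x$3)) < 1)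
       \<or> (0 < (cmod (x$1))^2 + (cmod (x$2))^2 + (cmod (x$3))^2 \<and> (cmod (x$1))^2 + (cmod (x$2))^2 + (cmod (x$3))^2 \<le> 36/25
          \<and> (x$1)^p + (x$2)^q + (x$3)^r + of_real a * (x$1) * (x$2) * (x$3) = 0)"
    proof (rule disjE[OF cond])
      assume "norm x = 1 \<and> cmod ((x$1)^p + (x$2)^q + (x$3)^r + complex_of_real a * (x$1) * (x$2) * (x$3)) < 1"
      thus ?thesis unfolding n3 by simp
    next
      assume h: "0 < norm x \<and> norm x \<le> 6/5 \<and> (x$1)^p + (x$2)^q + (x$3)^r + complex_of_real a * (x$1) * (x$2) * (x$3) = 0"
      have "(norm x)^2 \<le> (6/5)^2" using h by (intro power_mono) auto
      moreover have "(norm x)^2 > 0" using h by simp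
      ultimately show ?thesis unfolding n3 using h by (simp add: power2_eq_square)
    qed
    show False by (rule nonpar[OF p S M a G c2])
  qed
qed

theorem lemma1p8:
  fixes p q r :: nat and a :: real and t :: complex
  assumes "p > 0" "q > 0" "r > 0"
    and "1 / real p + 1 / real q + 1 / real r \<le> 1"
    and "a > 12 * real (max p (max q r))"
    and "0 < cmod t" "cmod t < 1"
  shows "is_milnor_fiber
           (\<lambda>x::complex^3. (x$1)^p + (x$2)^q + (x$3)^r + complex_of_real a * (x$1) * (x$2) * (x$3))
           ((\<lambda>x::complex^3. (x$1)^p + (x$2)^q + (x$3)^r + complex_of_real a * (x$1) * (x$2) * (x$3)) -` {t}
              \<inter> cball 0 1)"
proof -
  define f where "f = (\<lambda>x::complex^3. (x$1)^p + (x$2)^q + (x$3)^r + complex_of_real a * (x$1) * (x$2) * (x$3))"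
  define M where "M = real (max p (max q r))"
  have M: "real p \<le> M" "real q \<le> M" "real r \<le> M" by (auto simp: M_def)
  have a: "a > 12 * M" using assms(5) by (simp add: M_def)
  have S: "1 / real p + 1 / real q + 1 / real r \<le> 1" by fact
  have pos: "1 / real p > 0" "1 / real q > 0" "1 / real r > 0" using assms(1-3) by auto
  have p2: "p \<ge> 2"
  proof (rule ccontr)
    assume "\<not> p \<ge> 2" hence "p = 1" using assms(1) by linarith
    thus False using S pos by simp
  qed
  have q2: "q \<ge> 2"
  proof (rule ccontr)
    assume "\<not> q \<ge> 2" hence "q = 1" using assms(2) by linarith
    thus False using S pos by simp
  qed
  have r2: "r \<ge> 2"
  proof (rule ccontr)
    assume "\<not> r \<ge> 2" hence "r = 1" using assms(3) by linarith
    thus False using S pos by simp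
  qed
  note tp = transv_point[OF p2 q2 r2 S M a, folded f_def]
  have rad: "\<forall>\<rho>. 0 < \<rho> \<and> \<rho> \<le> 6/5 \<longrightarrow> sphere_transverse f 0 \<rho>"
    unfolding sphere_transverse_def
  proof (intro allI impI ballI)
    fix \<rho> :: real and x assume h: "0 < \<rho> \<and> \<rho> \<le> 6/5" and x: "x \<in> f -` {0} \<inter> sphere 0 \<rho>"
    show "transversal_at f x"
      by (rule tp) (use h x in \<open>auto simp: f_def\<close>)
  qed
  have mr: "ereal 1 < milnor_radius f"
  proof -
    have "ereal (6/5) \<le> milnor_radius f"
      unfolding milnor_radius_def by (rule SUP_upper) (use rad in auto)
    thus ?thesis by (simp add: order_less_le_trans[of _ "ereal (6/5)"])
  qed
  have fib: "\<forall>s. cmod s \<le> cmod t \<longrightarrow> sphere_transverse f s 1"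
    unfolding sphere_transverse_def
  proof (intro allI impI ballI)
    fix s x assume s: "cmod s \<le> cmod t" and x: "x \<in> f -` {s} \<inter> sphere 0 1"
    show "transversal_at f x"
      by (rule tp) (use s x assms(7) in \<open>auto simp: f_def\<close>)
  qed
  have tt: "complex_of_real (cmod t) * cis (Arg t) = t"
    using rcis_cmod_Arg[of t] by (simp add: rcis_def)
  show ?thesis
    unfolding is_milnor_fiber_def f_def[symmetric]
    by (rule exI[of _ 1], rule exI[of _ "cmod t"], rule exI[of _ "Arg t"])
       (use mr fib tt assms(6) in simp)
qed


end
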